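(* Let $(G,b,x,2)$ be an instance of Collapsed $k$-Core with $k=2$ such that $G$ is its own $2$-core (every vertex of $G$ has degree at least $2$) and no connected component of $G$ is a cycle. If there is a set $B\subseteq V(G)$ with $|B|\le b$ such that the $2$-core of $G-B$ has at most $x$ vertices, then there is also a set $B'\subseteq V(G)$ with $|B'|\le b$ such that the $2$-core of $G-B'$ has at most $x$ vertices and every vertex of $B'$ has degree larger than $2$ in $G$.
   Context: For an integer $k$, the $k$-core of a graph $G$ is the (uniquely determined) largest induced subgraph of $G$ in which every vertex has degree at least $k$ (possibly empty); its size is its number of vertices. Collapsed $k$-Core: given an undirected graph $G=(V,E)$ and integers $b$, $x$, $k$, decide whether there is a set $S\subseteq V$ with $|S|\le b$ such that the $k$-core of $G-S$ has at most $x$ vertices. *)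

theory Defs
  imports Main
begin

definition graph :: "'a set \<Rightarrow> 'a set set \<Rightarrow> bool" where
  "graph V E \<longleftrightarrow> finite V \<and> (\<forall>e\<in>E. e \<subseteq> V \<and> card e = 2)"

definition nbrs_in :: "'a set set \<Rightarrow> 'a set \<Rightarrow> 'a \<Rightarrow> 'a set" where
  "nbrs_in E W v = {u\<in>W. {u, v} \<in> E}"

definition deg_in :: "'a set set \<Rightarrow> 'a set \<Rightarrow> 'a \<Rightarrow> nat" where
  "deg_in E W v = card (nbrs_in E W v)"

abbreviation degree :: "'a set \<Rightarrow> 'a set set \<Rightarrow> 'a \<Rightarrow> nat" where
  "degree V E v \<equiv> deg_in E V v"

text \<open>k-core of the graph (V,E): the largest W \<subseteq> V such that every vertex of the
  induced subgraph G[W] has degree at least k in G[W]. Such sets are closed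
  under union, so the largest one is the union of all of them.\<close>
definition k_core :: "nat \<Rightarrow> 'a set \<Rightarrow> 'a set set \<Rightarrow> 'a set" where
  "k_core k V E = \<Union>{W. W \<subseteq> V \<and> (\<forall>v\<in>W. deg_in E W v \<ge> k)}"

definition del_verts :: "'a set \<Rightarrow> 'a set set \<Rightarrow> 'a set \<Rightarrow> 'a set \<times> 'a set set" where
  "del_verts V E S = (V - S, {e\<in>E. e \<inter> S = {}})"

definition adj :: "'a set set \<Rightarrow> ('a \<times> 'a) set" where
  "adj E = {(u, v). {u, v} \<in> E}"

definition connected_component :: "'a set \<Rightarrow> 'a set set \<Rightarrow> 'a set \<Rightarrow> bool" where
  "connected_component V E C \<longleftrightarrow>
     (\<exists>v\<in>V. C = {u. (v, u) \<in> (adj E)\<^sup>*})"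

text \<open>A connected component C is a cycle iff the subgraph it induces is a
  cycle graph, i.e. a connected 2-regular simple graph (automatically on at
  least 3 vertices).\<close>
definition component_is_cycle :: "'a set \<Rightarrow> 'a set set \<Rightarrow> 'a set \<Rightarrow> bool" where
  "component_is_cycle V E C \<longleftrightarrow> connected_component V E C \<and> (\<forall>v\<in>C. deg_in E C v = 2)"

end

theory Submission
  imports Defs
begin

definition adjD :: "'a set \<Rightarrow> 'a set set \<Rightarrow> ('a \<times> 'a) set" where
  "adjD V E = {(p, q). {p, q} \<in> E \<and> degree V E p = 2 \<and> degree V E q = 2}"

lemma nbrs_del:
  assumes "W \<inter> S = {}" "w \<in> W"
  shows "nbrs_in {e\<in>E. e \<inter> S = {}} W w = nbrs_in E W w"
  using assms by (auto simp: nbrs_in_def)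

lemma core_eq:
  "k_core 2 (fst (del_verts V E S)) (snd (del_verts V E S)) =
     \<Union>{W. W \<subseteq> V - S \<and> (\<forall>w\<in>W. 2 \<le> deg_in E W w)}"
proof -
  have "{W. W \<subseteq> V - S \<and> (\<forall>w\<in>W. 2 \<le> deg_in {e\<in>E. e \<inter> S = {}} W w)} =
        {W. W \<subseteq> V - S \<and> (\<forall>w\<in>W. 2 \<le> deg_in E W w)}"
  proof (intro Collect_cong iffI conjI)
    fix W assume a: "W \<subseteq> V - S \<and> (\<forall>w\<in>W. 2 \<le> deg_in {e\<in>E. e \<inter> S = {}} W w)"
    then have "W \<inter> S = {}" by blast
    with a show "W \<subseteq> V - S" "\<forall>w\<in>W. 2 \<le> deg_in E W w"
      by (auto simp: deg_in_def nbrs_del)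
  next
    fix W assume a: "W \<subseteq> V - S \<and> (\<forall>w\<in>W. 2 \<le> deg_in E W w)"
    then have "W \<inter> S = {}" by blast
    with a show "W \<subseteq> V - S" "\<forall>w\<in>W. 2 \<le> deg_in {e\<in>E. e \<inter> S = {}} W w"
      by (auto simp: deg_in_def nbrs_del)
  qed
  then show ?thesis by (simp add: k_core_def del_verts_def)
qed

lemma edge_in_V: "graph V E \<Longrightarrow> {a, b} \<in> E \<Longrightarrow> a \<in> V \<and> b \<in> V"
  unfolding graph_def by blast

lemma full_nbrs:
  assumes g: "graph V E" and W: "W \<subseteq> V" and d: "2 \<le> deg_in E W y"
    and dy: "degree V E y = 2" and e: "{z, y} \<in> E"
  shows "z \<in> W"
proof -
  have fin: "finite (nbrs_in E V y)" using g unfolding graph_def nbrs_in_def by auto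
  have sub: "nbrs_in E W y \<subseteq> nbrs_in E V y" using W unfolding nbrs_in_def by auto
  have "card (nbrs_in E V y) \<le> card (nbrs_in E W y)" using d dy by (simp add: deg_in_def)
  then have eq: "nbrs_in E W y = nbrs_in E V y"
    using card_subset_eq[OF fin sub] card_mono[OF fin sub] by linarith
  have "z \<in> nbrs_in E V y" using e edge_in_V[OF g e] by (simp add: nbrs_in_def)
  then show ?thesis using eq by (auto simp: nbrs_in_def)
qed

lemma closed:
  assumes g: "graph V E" and W: "W \<subseteq> V" and P: "\<forall>w\<in>W. 2 \<le> deg_in E W w"
    and r: "(a, y) \<in> (adjD V E)\<^sup>*" and a: "a \<in> W"
  shows "y \<in> W"
  using r
proof (induction rule: rtrancl_induct)
  case base then show ?case using a .
next
  case (step y z)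
  then have "{y, z} \<in> E" "degree V E y = 2" by (auto simp: adjD_def)
  then show ?case using full_nbrs[OF g W, of y z] P step by (simp add: insert_commute)
qed

lemma deg_path:
  assumes "(v, r) \<in> (adjD V E)\<^sup>*" "degree V E v = 2"
  shows "degree V E r = 2"
  using assms by (induction rule: rtrancl_induct) (auto simp: adjD_def)

lemma exists_exit:
  assumes g: "graph V E" and nc: "\<not> (\<exists>C. component_is_cycle V E C)"
    and vV: "v \<in> V" and dv: "degree V E v = 2"
  shows "\<exists>r u. (v, r) \<in> (adjD V E)\<^sup>* \<and> {u, r} \<in> E \<and> degree V E u \<noteq> 2"
proof (rule ccontr)
  assume "\<not> ?thesis"
  then have H: "\<And>r u. (v, r) \<in> (adjD V E)\<^sup>* \<Longrightarrow> {u, r} \<in> E \<Longrightarrow> degree V E u = 2" by blast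
  define R where "R = {y. (v, y) \<in> (adjD V E)\<^sup>*}"
  have stp: "(v, z) \<in> (adjD V E)\<^sup>*" if "(v, y) \<in> (adjD V E)\<^sup>*" "{y, z} \<in> E" for y z
  proof -
    have "degree V E y = 2" using deg_path[OF that(1) dv] .
    moreover have "degree V E z = 2" using H[OF that(1)] that(2) by (simp add: insert_commute)
    ultimately have "(y, z) \<in> adjD V E" using that(2) by (simp add: adjD_def)
    then show ?thesis using that(1) by (meson rtrancl_into_rtrancl)
  qed
  have "R = {u. (v, u) \<in> (adj E)\<^sup>*}"
  proof (intro set_eqI iffI)
    fix y assume "y \<in> R"
    then have "(v, y) \<in> (adjD V E)\<^sup>*" by (simp add: R_def)
    moreover have "adjD V E \<subseteq> adj E" by (auto simp: adjD_def adj_def)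
    ultimately show "y \<in> {u. (v, u) \<in> (adj E)\<^sup>*}" using rtrancl_mono by blast
  next
    fix y assume "y \<in> {u. (v, u) \<in> (adj E)\<^sup>*}"
    then have "(v, y) \<in> (adj E)\<^sup>*" by simp
    then show "y \<in> R"
    proof (induction rule: rtrancl_induct)
      case base then show ?case by (simp add: R_def)
    next
      case (step y z) then show ?case using stp by (auto simp: R_def adj_def)
    qed
  qed
  then have cc: "connected_component V E R" using vV by (auto simp: connected_component_def)
  have "\<forall>y\<in>R. deg_in E R y = 2"
  proof
    fix y assume yR: "y \<in> R"
    have "nbrs_in E R y = nbrs_in E V y"
    proof (intro set_eqI iffI)
      fix z assume "z \<in> nbrs_in E R y"
      then show "z \<in> nbrs_in E V y" using edge_in_V[OF g] by (auto simp: nbrs_in_def)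
    next
      fix z assume "z \<in> nbrs_in E V y"
      then have "{y, z} \<in> E" "z \<in> V" by (auto simp: nbrs_in_def insert_commute)
      then show "z \<in> nbrs_in E R y" using stp yR by (auto simp: R_def nbrs_in_def insert_commute)
    qed
    then show "deg_in E R y = 2" using deg_path yR dv by (simp add: R_def deg_in_def)
  qed
  then have "component_is_cycle V E R" using cc by (simp add: component_is_cycle_def)
  then show False using nc by blast
qed

abbreviation bad where "bad V E B \<equiv> {w\<in>B. degree V E w \<le> 2}"

lemma step_lemma:
  assumes g: "graph V E" and md: "\<forall>v\<in>V. degree V E v \<ge> 2"
    and nc: "\<not> (\<exists>C. component_is_cycle V E C)"
    and B: "B \<subseteq> V" and vB: "v \<in> B" and dv: "degree V E v \<le> 2"
  shows "\<exists>B'. B' \<subseteq> V \<and> card B' \<le> card B \<and>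
     card (k_core 2 (fst (del_verts V E B')) (snd (del_verts V E B'))) \<le>
     card (k_core 2 (fst (del_verts V E B)) (snd (del_verts V E B))) \<and>
     bad V E B' \<subset> bad V E B"
proof -
  have finV: "finite V" using g by (simp add: graph_def)
  have finB: "finite B" using B finV finite_subset by blast
  have vV: "v \<in> V" using B vB by blast
  have dv2: "degree V E v = 2" using dv md vV by force
  obtain r u where r: "(v, r) \<in> (adjD V E)\<^sup>*" and e: "{u, r} \<in> E" and du: "degree V E u \<noteq> 2"
    using exists_exit[OF g nc vV dv2] by blast
  have uV: "u \<in> V" using edge_in_V[OF g e] by blast
  have du3: "degree V E u > 2" using du md uV by force
  have dr: "degree V E r = 2" using deg_path[OF r dv2] .
  define B' where "B' = insert u (B - {v})"
  have B'V: "B' \<subseteq> V" using B uV by (auto simp: B'_def)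
  have "card B' \<le> Suc (card (B - {v}))" unfolding B'_def
    by (metis card_insert_if finB finite_Diff le_SucI order_refl)
  also have "\<dots> = card B" using vB finB by (metis card_Suc_Diff1)
  finally have cB: "card B' \<le> card B" .
  have badsub: "bad V E B' \<subset> bad V E B"
    using du3 vB dv by (auto simp: B'_def)
  have sub: "\<Union>{W. W \<subseteq> V - B' \<and> (\<forall>w\<in>W. 2 \<le> deg_in E W w)} \<subseteq>
             \<Union>{W. W \<subseteq> V - B \<and> (\<forall>w\<in>W. 2 \<le> deg_in E W w)}"
  proof (rule Union_mono, rule subsetI)
    fix W assume "W \<in> {W. W \<subseteq> V - B' \<and> (\<forall>w\<in>W. 2 \<le> deg_in E W w)}"
    then have W: "W \<subseteq> V - B'" and P: "\<forall>w\<in>W. 2 \<le> deg_in E W w" by auto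
    have WV: "W \<subseteq> V" using W by blast
    have "v \<notin> W"
    proof
      assume "v \<in> W"
      then have "r \<in> W" using closed[OF g WV P r] by blast
      then have "u \<in> W" using full_nbrs[OF g WV _ dr e] P by blast
      then show False using W by (auto simp: B'_def)
    qed
    then have "W \<subseteq> V - B" using W by (auto simp: B'_def)
    then show "W \<in> {W. W \<subseteq> V - B \<and> (\<forall>w\<in>W. 2 \<le> deg_in E W w)}" using P by blast
  qed
  have fin: "finite (\<Union>{W. W \<subseteq> V - B \<and> (\<forall>w\<in>W. 2 \<le> deg_in E W w)})"
    by (rule finite_subset[OF _ finV]) blast
  have "card (k_core 2 (fst (del_verts V E B')) (snd (del_verts V E B'))) \<le>
     card (k_core 2 (fst (del_verts V E B)) (snd (del_verts V E B)))"
    unfolding core_eq using card_mono[OF fin sub] .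
  then show ?thesis using B'V cB badsub by blast
qed

lemma main_ind:
  assumes g: "graph V E" and md: "\<forall>v\<in>V. degree V E v \<ge> 2"
    and nc: "\<not> (\<exists>C. component_is_cycle V E C)"
  shows "card (bad V E B) = n \<Longrightarrow> B \<subseteq> V \<Longrightarrow> \<exists>B'. B' \<subseteq> V \<and> card B' \<le> card B \<and>
     card (k_core 2 (fst (del_verts V E B')) (snd (del_verts V E B'))) \<le>
     card (k_core 2 (fst (del_verts V E B)) (snd (del_verts V E B))) \<and>
     (\<forall>v\<in>B'. degree V E v > 2)"
proof (induction n arbitrary: B rule: less_induct)
  case (less n B)
  have finV: "finite V" using g by (simp add: graph_def)
  show ?case
  proof (cases "\<exists>v\<in>B. degree V E v \<le> 2")
    case False
    then show ?thesis using less.prems by (intro exI[of _ B]) auto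
  next
    case True
    then obtain v where "v \<in> B" "degree V E v \<le> 2" by blast
    from step_lemma[OF g md nc less.prems(2) this] obtain B1 where
      B1: "B1 \<subseteq> V" "card B1 \<le> card B"
      "card (k_core 2 (fst (del_verts V E B1)) (snd (del_verts V E B1))) \<le>
       card (k_core 2 (fst (del_verts V E B)) (snd (del_verts V E B)))"
      "bad V E B1 \<subset> bad V E B" by blast
    have "finite (bad V E B)" using less.prems(2) finV finite_subset by fastforce
    then have "card (bad V E B1) < n" using psubset_card_mono B1(4) less.prems(1) by blast
    from less.IH[OF this refl B1(1)] obtain B2 where
      "B2 \<subseteq> V \<and> card B2 \<le> card B1 \<and>
       card (k_core 2 (fst (del_verts V E B2)) (snd (del_verts V E B2))) \<le>
       card (k_core 2 (fst (del_verts V E B1)) (snd (del_verts V E B1))) \<and>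
       (\<forall>v\<in>B2. degree V E v > 2)" by blast
    then show ?thesis using B1 by (intro exI[of _ B2]) auto
  qed
qed

theorem mainTheorem7:
  fixes V :: "'a set" and E :: "'a set set" and b x :: nat
  assumes "graph V E"
    and "\<forall>v\<in>V. degree V E v \<ge> 2"
    and "\<not> (\<exists>C. component_is_cycle V E C)"
    and "\<exists>B. B \<subseteq> V \<and> card B \<le> b \<and>
           card (k_core 2 (fst (del_verts V E B)) (snd (del_verts V E B))) \<le> x"
  shows "\<exists>B'. B' \<subseteq> V \<and> card B' \<le> b \<and>
           card (k_core 2 (fst (del_verts V E B')) (snd (del_verts V E B'))) \<le> x \<and>
           (\<forall>v\<in>B'. degree V E v > 2)"
proof -
  obtain B where B: "B \<subseteq> V" "card B \<le> b"
    "card (k_core 2 (fst (del_verts V E B)) (snd (del_verts V E B))) \<le> x"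
    using assms(4) by blast
  from main_ind[OF assms(1-3) refl B(1)] obtain B' where
    "B' \<subseteq> V \<and> card B' \<le> card B \<and>
     card (k_core 2 (fst (del_verts V E B')) (snd (del_verts V E B'))) \<le>
     card (k_core 2 (fst (del_verts V E B)) (snd (del_verts V E B))) \<and>
     (\<forall>v\<in>B'. degree V E v > 2)" by blast
  then show ?thesis using B by (intro exI[of _ B']) auto
qed

end
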